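(* Consider a smoothed network coordination game on a graph $G=(V,E)$ with $n=|V|$, $m=|E|$, maximum degree $\Delta(G)$, and $k$ actions per player, where every payoff entry $A_{uv}(i,j)$ ($uv\in E$, $i,j\in[k]$) is drawn independently from a distribution with density $f_{uv,i,j}:[-1,1]\to[0,\phi]$. Then the expected maximum number of steps of better-response dynamics (over all initial profiles and all better-response sequences) is $O(k^{4\Delta(G)+6}nm^2\phi)$.
   Context: A network coordination game is given by an undirected graph $G=(V,E)$ whose vertices are players; each player chooses one of $k$ actions, and for each edge $uv\in E$ there is a $k\times k$ payoff matrix $A_{uv}$ (with $A_{vu}=A_{uv}^\top$). In profile $\sigma$, player $u$'s payoff is $\sum_{v:\,uv\in E}A_{uv}(\sigma_u,\sigma_v)$. A better-response step is a unilateral change of action by one player that strictly increases her payoff; a pure Nash equilibrium is a profile with no such step. *)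

theory Defs
  imports "HOL-Probability.Probability"
begin

text \<open>For an edge {u,v} with u < v,
  the payoff matrix A_uv is stored as the entries A (u,v,i,j); the matrix
  A_vu is its transpose.\<close>

definition simple_graph :: "nat \<Rightarrow> nat set set \<Rightarrow> bool" where
  "simple_graph n E \<longleftrightarrow> (\<forall>e\<in>E. e \<subseteq> {..<n} \<and> card e = 2)"

definition max_degree :: "nat \<Rightarrow> nat set set \<Rightarrow> nat" where
  "max_degree n E = Max (insert 0 ((\<lambda>v. card {e\<in>E. v \<in> e}) ` {..<n}))"

text \<open>Index set of the independent random payoff entries.\<close>
definition entry_index :: "nat set set \<Rightarrow> nat \<Rightarrow> (nat \<times> nat \<times> nat \<times> nat) set" where
  "entry_index E k = {(u,v,i,j). u < v \<and> {u,v} \<in> E \<and> i < k \<and> j < k}"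

definition edge_payoff :: "(nat \<times> nat \<times> nat \<times> nat \<Rightarrow> real) \<Rightarrow> nat \<Rightarrow> nat \<Rightarrow> nat \<Rightarrow> nat \<Rightarrow> real" where
  "edge_payoff A u v i j = (if u < v then A (u,v,i,j) else A (v,u,j,i))"

definition payoff :: "nat set set \<Rightarrow> (nat \<times> nat \<times> nat \<times> nat \<Rightarrow> real) \<Rightarrow> (nat \<Rightarrow> nat) \<Rightarrow> nat \<Rightarrow> real" where
  "payoff E A \<sigma> u = (\<Sum>v\<in>{v. {u,v} \<in> E}. edge_payoff A u v (\<sigma> u) (\<sigma> v))"

definition profiles :: "nat \<Rightarrow> nat \<Rightarrow> (nat \<Rightarrow> nat) set" where
  "profiles n k = ({..<n} \<rightarrow>\<^sub>E {..<k})"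

definition br_step :: "nat \<Rightarrow> nat \<Rightarrow> nat set set \<Rightarrow> (nat \<times> nat \<times> nat \<times> nat \<Rightarrow> real)
    \<Rightarrow> (nat \<Rightarrow> nat) \<Rightarrow> (nat \<Rightarrow> nat) \<Rightarrow> bool" where
  "br_step n k E A \<sigma> \<sigma>' \<longleftrightarrow>
     (\<exists>u<n. \<exists>a<k. \<sigma>' = \<sigma>(u := a) \<and> payoff E A \<sigma> u < payoff E A \<sigma>' u)"

text \<open>Better-response sequences: lists of profiles sigma_0, ..., sigma_t (t steps).\<close>
definition br_seq :: "nat \<Rightarrow> nat \<Rightarrow> nat set set \<Rightarrow> (nat \<times> nat \<times> nat \<times> nat \<Rightarrow> real)
    \<Rightarrow> (nat \<Rightarrow> nat) list \<Rightarrow> bool" where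
  "br_seq n k E A xs \<longleftrightarrow> xs \<noteq> [] \<and> hd xs \<in> profiles n k \<and>
     (\<forall>i. Suc i < length xs \<longrightarrow> br_step n k E A (xs ! i) (xs ! Suc i))"

definition max_br_steps :: "nat \<Rightarrow> nat \<Rightarrow> nat set set \<Rightarrow> (nat \<times> nat \<times> nat \<times> nat \<Rightarrow> real) \<Rightarrow> ennreal" where
  "max_br_steps n k E A = (SUP xs\<in>{xs. br_seq n k E A xs}. ennreal (real (length xs - 1)))"

end

theory Submission
  imports Defs "HOL-Analysis.Harmonic_Numbers"
begin


definition nbr :: "nat set set \<Rightarrow> nat \<Rightarrow> nat set" where
  "nbr E u = {v. {u,v} \<in> E}"

definition idx :: "nat \<Rightarrow> nat \<Rightarrow> nat \<Rightarrow> nat \<Rightarrow> nat \<times> nat \<times> nat \<times> nat" where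
  "idx u v i j = (if u < v then (u,v,i,j) else (v,u,j,i))"

lemma edge_payoff_idx: "edge_payoff A u v i j = A (idx u v i j)"
  by (simp add: edge_payoff_def idx_def)

lemma edge_payoff_sym: "u \<noteq> v \<Longrightarrow> edge_payoff A u v i j = edge_payoff A v u j i"
  by (auto simp: edge_payoff_def)

definition pe :: "(nat \<times> nat \<times> nat \<times> nat \<Rightarrow> real) \<Rightarrow> nat set \<Rightarrow> (nat \<Rightarrow> nat) \<Rightarrow> real" where
  "pe A e \<sigma> = edge_payoff A (Min e) (Max e) (\<sigma> (Min e)) (\<sigma> (Max e))"

definition pot :: "nat set set \<Rightarrow> (nat \<times> nat \<times> nat \<times> nat \<Rightarrow> real) \<Rightarrow> (nat \<Rightarrow> nat) \<Rightarrow> real" where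
  "pot E A \<sigma> = (\<Sum>e\<in>E. pe A e \<sigma>)"

lemma sg_edge: "simple_graph n E \<Longrightarrow> {u,v} \<in> E \<Longrightarrow> u \<noteq> v \<and> u < n \<and> v < n"
proof -
  assume sg: "simple_graph n E" and e: "{u,v} \<in> E"
  have cs: "{u,v} \<subseteq> {..<n} \<and> card {u,v} = 2"
    using sg e unfolding simple_graph_def by (rule bspec)
  then have c: "card {u,v} = 2" and s: "{u,v} \<subseteq> {..<n}" by simp_all
  have "u \<noteq> v"
  proof
    assume "u = v"
    then have "card {u,v} = 1" by simp
    with c show False by simp
  qed
  moreover have "u < n" "v < n" using s by auto
  ultimately show ?thesis by simp
qed

lemma sg_edge2: "simple_graph n E \<Longrightarrow> e \<in> E \<Longrightarrow> \<exists>u v. e = {u,v} \<and> u < v"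
proof -
  assume "simple_graph n E" "e \<in> E"
  then have "card e = 2" unfolding simple_graph_def by simp
  then obtain x y where xy: "e = {x,y}" "x \<noteq> y" unfolding card_2_iff by (elim exE conjE)
  show ?thesis
  proof (cases "x < y")
    case True then show ?thesis using xy by (intro exI[of _ x] exI[of _ y]) simp
  next
    case False
    then have "y < x" using \<open>x \<noteq> y\<close> by simp
    moreover have "e = {y,x}" using xy(1) by (simp add: insert_commute)
    ultimately show ?thesis by (intro exI[of _ y] exI[of _ x]) simp
  qed
qed

lemma sg_finite: "simple_graph n E \<Longrightarrow> finite E"
proof -
  assume "simple_graph n E"
  then have "E \<subseteq> Pow {..<n}" unfolding simple_graph_def by auto
  then show ?thesis by (rule finite_subset) simp
qed

lemma nbr_sub: "simple_graph n E \<Longrightarrow> nbr E u \<subseteq> {..<n}"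
proof
  fix v assume "simple_graph n E" "v \<in> nbr E u"
  then show "v \<in> {..<n}" using sg_edge[of n E u v] unfolding nbr_def by simp
qed

lemma nbr_finite: "simple_graph n E \<Longrightarrow> finite (nbr E u)"
  using nbr_sub[of n E u] finite_subset[of "nbr E u" "{..<n}"] by simp

lemma nbr_notin: "simple_graph n E \<Longrightarrow> u \<notin> nbr E u"
  unfolding nbr_def using sg_edge[of n E u u] by auto

lemma payoff_nbr: "payoff E A \<sigma> u = (\<Sum>v\<in>nbr E u. edge_payoff A u v (\<sigma> u) (\<sigma> v))"
  by (simp add: payoff_def nbr_def)

lemma pe_pair: assumes uv: "u \<noteq> v" shows "pe A {u,v} \<sigma> = edge_payoff A u v (\<sigma> u) (\<sigma> v)"
proof (cases "u < v")
  case True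
  then have "Min {u,v} = u" "Max {u,v} = v" by auto
  then show ?thesis by (simp add: pe_def)
next
  case False
  with uv have "v < u" by simp
  then have "Min {u,v} = v" "Max {u,v} = u" by auto
  then show ?thesis using edge_payoff_sym[OF \<open>u \<noteq> v\<close>, of A "\<sigma> u" "\<sigma> v"] by (simp add: pe_def)
qed

lemma pot_split:
  assumes sg: "simple_graph n E"
  shows "pot E A \<sigma> = (\<Sum>e\<in>{e\<in>E. w \<notin> e}. pe A e \<sigma>) + payoff E A \<sigma> w"
proof -
  have fin: "finite E" using sg_finite[OF sg] .
  have Eu: "E = {e\<in>E. w \<notin> e} \<union> {e\<in>E. w \<in> e}" by auto
  have img: "{e\<in>E. w \<in> e} = (\<lambda>v. {w,v}) ` nbr E w"
  proof
    show "{e\<in>E. w \<in> e} \<subseteq> (\<lambda>v. {w,v}) ` nbr E w"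
    proof
      fix e assume e: "e \<in> {e\<in>E. w \<in> e}"
      then obtain x y where xy: "e = {x,y}" "x < y" using sg_edge2[OF sg] by blast
      show "e \<in> (\<lambda>v. {w,v}) ` nbr E w"
      proof (cases "w = x")
        case True then show ?thesis using e xy by (auto simp: nbr_def)
      next
        case False then have "w = y" using e xy by auto
        then have ew: "e = {w,x}" using xy by (simp add: insert_commute)
        then have "{w,x} \<in> E" using e by simp
        then show ?thesis using ew by (auto simp: nbr_def)
      qed
    qed
  qed (auto simp: nbr_def)
  have inj: "inj_on (\<lambda>v. {w,v}) (nbr E w)"
    using nbr_notin[OF sg] by (auto simp: inj_on_def doubleton_eq_iff)
  have "pot E A \<sigma> = (\<Sum>e\<in>{e\<in>E. w \<notin> e}. pe A e \<sigma>) + (\<Sum>e\<in>{e\<in>E. w \<in> e}. pe A e \<sigma>)"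
    unfolding pot_def using fin by (subst Eu) (rule sum.union_disjoint, auto)
  also have "(\<Sum>e\<in>{e\<in>E. w \<in> e}. pe A e \<sigma>) = (\<Sum>v\<in>nbr E w. pe A {w,v} \<sigma>)"
    unfolding img using inj by (simp add: sum.reindex)
  also have "\<dots> = payoff E A \<sigma> w"
    unfolding payoff_nbr using nbr_notin[OF sg, of w]
    by (intro sum.cong refl pe_pair) auto
  finally show ?thesis .
qed

lemma pe_upd: "finite e \<Longrightarrow> e \<noteq> {} \<Longrightarrow> w \<notin> e \<Longrightarrow> pe A e (\<sigma>(w := a)) = pe A e \<sigma>"
  unfolding pe_def by (metis Max_in Min_in fun_upd_other)

lemma pot_step:
  assumes sg: "simple_graph n E"
  shows "pot E A (\<sigma>(w := a)) - pot E A \<sigma> = payoff E A (\<sigma>(w := a)) w - payoff E A \<sigma> w"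
proof -
  have "(\<Sum>e\<in>{e\<in>E. w \<notin> e}. pe A e (\<sigma>(w := a))) = (\<Sum>e\<in>{e\<in>E. w \<notin> e}. pe A e \<sigma>)"
  proof (intro sum.cong refl)
    fix e assume "e \<in> {e\<in>E. w \<notin> e}"
    then obtain x y where "e = {x,y}" "w \<notin> e" using sg_edge2[OF sg] by blast
    then show "pe A e (\<sigma>(w := a)) = pe A e \<sigma>" by (intro pe_upd) auto
  qed
  then show ?thesis using pot_split[OF sg, of A "\<sigma>(w := a)" w] pot_split[OF sg, of A \<sigma> w] by linarith
qed

definition gain :: "nat set set \<Rightarrow> (nat \<times> nat \<times> nat \<times> nat \<Rightarrow> real) \<Rightarrow> nat \<times> nat \<times> nat \<times> (nat \<Rightarrow> nat) \<Rightarrow> real" where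
  "gain E A s = (case s of (u,i,a,\<tau>) \<Rightarrow> \<Sum>v\<in>nbr E u. (A (idx u v a (\<tau> v)) - A (idx u v i (\<tau> v))))"

lemma gain_step:
  assumes sg: "simple_graph n E"
  shows "payoff E A (\<sigma>(u := a)) u - payoff E A \<sigma> u = gain E A (u, \<sigma> u, a, restrict \<sigma> (nbr E u))"
  unfolding payoff_nbr gain_def edge_payoff_idx using nbr_notin[OF sg, of u]
  by (auto simp: sum_subtractf[symmetric] intro!: sum.cong)

lemma pot_restrict:
  assumes sg: "simple_graph n E"
  shows "pot E A (restrict \<sigma> (\<Union>E)) = pot E A \<sigma>"
  unfolding pot_def
proof (intro sum.cong refl)
  fix e assume e: "e \<in> E"
  then obtain x y where "e = {x,y}" using sg_edge2[OF sg] by blast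
  then have "Min e \<in> e" "Max e \<in> e" by auto
  with e show "pe A e (restrict \<sigma> (\<Union>E)) = pe A e \<sigma>" unfolding pe_def by auto
qed

lemma pe_bound:
  assumes sg: "simple_graph n E" and e: "e \<in> E" and \<sigma>: "\<sigma> \<in> profiles n k"
    and A: "\<forall>x\<in>entry_index E k. \<bar>A x\<bar> \<le> 1"
  shows "\<bar>pe A e \<sigma>\<bar> \<le> 1"
proof -
  obtain x y where xy: "e = {x,y}" "x < y" using sg_edge2[OF sg e] by blast
  then have mm: "Min e = x" "Max e = y" by auto
  have "x < n" "y < n" using sg_edge[OF sg, of x y] e xy by auto
  then have "\<sigma> x < k" "\<sigma> y < k" using \<sigma> by (auto simp: profiles_def)
  then have "(x,y,\<sigma> x,\<sigma> y) \<in> entry_index E k" using e xy by (auto simp: entry_index_def)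
  then show ?thesis unfolding pe_def mm edge_payoff_def using xy A by auto
qed

lemma pot_bound:
  assumes sg: "simple_graph n E" and \<sigma>: "\<sigma> \<in> profiles n k"
    and A: "\<forall>x\<in>entry_index E k. \<bar>A x\<bar> \<le> 1"
  shows "\<bar>pot E A \<sigma>\<bar> \<le> real (card E)"
proof -
  have "\<bar>pot E A \<sigma>\<bar> \<le> (\<Sum>e\<in>E. \<bar>pe A e \<sigma>\<bar>)" unfolding pot_def by (rule sum_abs)
  also have "\<dots> \<le> (\<Sum>e\<in>E. 1)" by (intro sum_mono pe_bound[OF sg _ \<sigma> A])
  finally show ?thesis by simp
qed



definition steps_set :: "nat \<Rightarrow> nat \<Rightarrow> nat set set \<Rightarrow> (nat \<times> nat \<times> nat \<times> (nat \<Rightarrow> nat)) set" where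
  "steps_set n k E = {(u,i,a,\<tau>). u < n \<and> i < k \<and> a < k \<and> i \<noteq> a \<and> \<tau> \<in> PiE (nbr E u) (\<lambda>_. {..<k})}"

lemma br_step_profiles:
  assumes "br_step n k E A \<sigma> \<sigma>'" "\<sigma> \<in> profiles n k"
  shows "\<sigma>' \<in> profiles n k"
proof -
  from assms(1) obtain u a where ua: "u < n" "a < k" "\<sigma>' = \<sigma>(u := a)" unfolding br_step_def by blast
  have "\<sigma>(u := a) \<in> PiE (insert u {..<n}) (\<lambda>_. {..<k})"
    using assms(2) ua by (intro PiE_fun_upd) (auto simp: profiles_def)
  then show ?thesis using ua by (simp add: profiles_def insert_absorb)
qed

lemma br_seq_profiles:
  assumes "br_seq n k E A xs"
  shows "i < length xs \<Longrightarrow> xs ! i \<in> profiles n k"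
proof (induction i)
  case 0 then show ?case using assms hd_conv_nth[of xs] by (simp add: br_seq_def)
next
  case (Suc i)
  then have "br_step n k E A (xs ! i) (xs ! Suc i)" using assms by (simp add: br_seq_def)
  then show ?case using Suc br_step_profiles by simp
qed

lemma br_step_gain:
  assumes sg: "simple_graph n E" and st: "br_step n k E A \<sigma> \<sigma>'" and \<sigma>: "\<sigma> \<in> profiles n k"
  shows "\<exists>s\<in>steps_set n k E. pot E A \<sigma>' - pot E A \<sigma> = gain E A s \<and> 0 < gain E A s"
proof -
  from st obtain u a where ua: "u < n" "a < k" "\<sigma>' = \<sigma>(u := a)"
      "payoff E A \<sigma> u < payoff E A \<sigma>' u" unfolding br_step_def by blast
  have ne: "\<sigma> u \<noteq> a"
  proof
    assume "\<sigma> u = a" then have "\<sigma>' = \<sigma>" using ua(3) fun_upd_triv[of \<sigma> u] by simp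
    then show False using ua by simp
  qed
  have su: "\<sigma> u < k" using \<sigma> ua by (auto simp: profiles_def)
  have r: "restrict \<sigma> (nbr E u) \<in> PiE (nbr E u) (\<lambda>_. {..<k})"
    using \<sigma> nbr_sub[OF sg, of u] by (auto simp: profiles_def)
  let ?s = "(u, \<sigma> u, a, restrict \<sigma> (nbr E u))"
  have s: "?s \<in> steps_set n k E" using ua ne su r by (simp add: steps_set_def)
  have eq: "pot E A \<sigma>' - pot E A \<sigma> = gain E A ?s"
    using pot_step[OF sg, of A \<sigma> u a] gain_step[OF sg, of A \<sigma> u a] ua by simp
  show ?thesis using s eq ua gain_step[OF sg, of A \<sigma> u a] by auto
qed

lemma pot_mono_seq:
  assumes sg: "simple_graph n E" and xs: "br_seq n k E A xs"
  shows "i < j \<Longrightarrow> j < length xs \<Longrightarrow> pot E A (xs ! i) < pot E A (xs ! j)"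
proof (induction j)
  case 0 then show ?case by simp
next
  case (Suc j)
  have st: "br_step n k E A (xs ! j) (xs ! Suc j)" using Suc xs by (simp add: br_seq_def)
  have "xs ! j \<in> profiles n k" using br_seq_profiles[OF xs] Suc by simp
  from br_step_gain[OF sg st this] have lt: "pot E A (xs ! j) < pot E A (xs ! Suc j)" by auto
  show ?case
  proof (cases "i = j")
    case True then show ?thesis using lt by simp
  next
    case False then have "pot E A (xs ! i) < pot E A (xs ! j)" using Suc by simp
    then show ?thesis using lt by simp
  qed
qed

lemma union_card:
  assumes sg: "simple_graph n E"
  shows "card (\<Union>E) \<le> 2 * card E"
proof -
  have "card (\<Union>E) \<le> (\<Sum>e\<in>E. card e)" by (rule card_Union_le_sum_card)
  also have "\<dots> = (\<Sum>e\<in>E. 2)" using sg unfolding simple_graph_def by (intro sum.cong) auto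
  finally show ?thesis by simp
qed

lemma length_bound:
  assumes sg: "simple_graph n E" and xs: "br_seq n k E A xs" and k: "1 \<le> k"
  shows "length xs \<le> k ^ (2 * card E)"
proof -
  let ?P = "PiE (\<Union>E) (\<lambda>_. {..<k})"
  have UE: "\<Union>E \<subseteq> {..<n}" using sg unfolding simple_graph_def by auto
  have finU: "finite (\<Union>E)" using UE finite_subset by blast
  let ?V = "pot E A ` ?P"
  have finV: "finite ?V" using finU by (simp add: finite_PiE)
  have inj: "inj_on (\<lambda>i. pot E A (xs ! i)) {..<length xs}"
  proof (rule inj_onI)
    fix i j assume ij: "i \<in> {..<length xs}" "j \<in> {..<length xs}" "pot E A (xs ! i) = pot E A (xs ! j)"
    show "i = j"
    proof (rule ccontr)
      assume "i \<noteq> j"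
      then consider "i < j" | "j < i" by linarith
      then show False using pot_mono_seq[OF sg xs, of i j] pot_mono_seq[OF sg xs, of j i] ij by cases auto
    qed
  qed
  have sub: "(\<lambda>i. pot E A (xs ! i)) ` {..<length xs} \<subseteq> ?V"
  proof
    fix x assume "x \<in> (\<lambda>i. pot E A (xs ! i)) ` {..<length xs}"
    then obtain i where i: "i < length xs" "x = pot E A (xs ! i)" by auto
    have pr: "xs ! i \<in> profiles n k" using br_seq_profiles[OF xs i(1)] .
    have "restrict (xs ! i) (\<Union>E) \<in> ?P" using pr UE by (auto simp: profiles_def)
    moreover have "x = pot E A (restrict (xs ! i) (\<Union>E))" using i pot_restrict[OF sg] by simp
    ultimately show "x \<in> ?V" by blast
  qed
  have "length xs = card {..<length xs}" by simp
  also have "\<dots> \<le> card ?V" by (rule card_inj_on_le[OF inj sub finV])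
  also have "\<dots> \<le> card ?P" by (rule card_image_le) (simp add: finU finite_PiE)
  also have "\<dots> = k ^ card (\<Union>E)" using finU by (simp add: card_PiE)
  also have "\<dots> \<le> k ^ (2 * card E)" using k union_card[OF sg] by (intro power_increasing) auto
  finally show ?thesis .
qed

lemma small_gain:
  assumes sg: "simple_graph n E" and xs: "br_seq n k E A xs"
    and A: "\<forall>x\<in>entry_index E k. \<bar>A x\<bar> \<le> 1" and L: "2 \<le> length xs"
  shows "\<exists>s\<in>steps_set n k E. 0 < gain E A s \<and> gain E A s \<le> 2 * real (card E) / real (length xs - 1)"
proof -
  let ?L = "length xs - 1"
  let ?d = "\<lambda>j. pot E A (xs ! Suc j) - pot E A (xs ! j)"
  have gj: "\<exists>s\<in>steps_set n k E. ?d j = gain E A s \<and> 0 < gain E A s" if "j < ?L" for j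
  proof -
    have st: "br_step n k E A (xs ! j) (xs ! Suc j)" using that xs by (simp add: br_seq_def)
    have "xs ! j \<in> profiles n k" using br_seq_profiles[OF xs] that by simp
    from br_step_gain[OF sg st this] show ?thesis .
  qed
  have sum: "(\<Sum>j<?L. ?d j) = pot E A (xs ! ?L) - pot E A (xs ! 0)"
    by (rule sum_lessThan_telescope)
  have l1: "?L < length xs" and l0: "0 < length xs" using L by auto
  have b1: "\<bar>pot E A (xs ! ?L)\<bar> \<le> real (card E)"
    using pot_bound[OF sg br_seq_profiles[OF xs l1] A] .
  have b2: "\<bar>pot E A (xs ! 0)\<bar> \<le> real (card E)"
    using pot_bound[OF sg br_seq_profiles[OF xs l0] A] .
  have sle: "(\<Sum>j<?L. ?d j) \<le> 2 * real (card E)" using sum b1 b2 by linarith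
  have Lpos: "0 < real ?L" using L by simp
  obtain j where j: "j < ?L" "?d j \<le> 2 * real (card E) / real ?L"
  proof (rule ccontr)
    assume "\<not> thesis"
    with that have all: "\<forall>j<?L. 2 * real (card E) / real ?L < ?d j" by force
    have "(\<Sum>j<?L. 2 * real (card E) / real ?L) < (\<Sum>j<?L. ?d j)"
    proof (rule sum_strict_mono)
      have "0 \<in> {..<?L}" using L by simp
      then show "{..<?L} \<noteq> {}" by blast
    qed (use all in auto)
    also have "(\<Sum>j<?L. 2 * real (card E) / real ?L) = 2 * real (card E)" using Lpos by simp
    finally show False using sle by simp
  qed
  from gj[OF j(1)] obtain s where "s \<in> steps_set n k E" "?d j = gain E A s" "0 < gain E A s" by blast
  then show ?thesis using j by auto
qed



lemma steps_sub:
  "steps_set n k E \<subseteq> (SIGMA u:{..<n}. {..<k} \<times> {..<k} \<times> PiE (nbr E u) (\<lambda>_. {..<k}))"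
  unfolding steps_set_def by auto

lemma steps_finite:
  assumes sg: "simple_graph n E" shows "finite (steps_set n k E)"
  by (rule finite_subset[OF steps_sub]) (auto intro!: finite_SigmaI finite_PiE nbr_finite[OF sg])

lemma nbr_card:
  assumes sg: "simple_graph n E" and u: "u < n"
  shows "card (nbr E u) \<le> max_degree n E"
proof -
  have fin: "finite E" by (rule sg_finite[OF sg])
  have inj: "inj_on (\<lambda>v. {u,v}) (nbr E u)"
    using nbr_notin[OF sg] by (auto simp: inj_on_def doubleton_eq_iff)
  have "card (nbr E u) \<le> card {e\<in>E. u \<in> e}"
    by (rule card_inj_on_le[OF inj]) (auto simp: nbr_def fin)
  also have "\<dots> \<le> max_degree n E" unfolding max_degree_def
    using u by (intro Max_ge) auto
  finally show ?thesis .
qed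

lemma steps_card:
  assumes sg: "simple_graph n E" and k: "1 \<le> k"
  shows "card (steps_set n k E) \<le> n * k ^ (max_degree n E + 2)"
proof -
  let ?B = "\<lambda>u. {..<k} \<times> {..<k} \<times> PiE (nbr E u) (\<lambda>_. {..<k})"
  have "card (steps_set n k E) \<le> card (SIGMA u:{..<n}. ?B u)"
    by (rule card_mono[OF _ steps_sub]) (auto intro!: finite_SigmaI finite_PiE nbr_finite[OF sg])
  also have "\<dots> = (\<Sum>u<n. card (?B u))"
    by (rule card_SigmaI) (auto intro!: finite_PiE nbr_finite[OF sg])
  also have "\<dots> = (\<Sum>u<n. k * k * k ^ card (nbr E u))"
    by (intro sum.cong refl) (simp add: card_cartesian_product card_PiE nbr_finite[OF sg])
  also have "\<dots> \<le> (\<Sum>u<n. k ^ (max_degree n E + 2))"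
  proof (intro sum_mono)
    fix u assume "u \<in> {..<n}"
    then have "k ^ card (nbr E u) \<le> k ^ max_degree n E" using k nbr_card[OF sg] by (intro power_increasing) auto
    then have "k * k * k ^ card (nbr E u) \<le> k * k * k ^ max_degree n E" by simp
    also have "\<dots> = k ^ (max_degree n E + 2)" by (simp add: power_add power2_eq_square)
    finally show "k * k * k ^ card (nbr E u) \<le> k ^ (max_degree n E + 2)" .
  qed
  also have "\<dots> = n * k ^ (max_degree n E + 2)" by simp
  finally show ?thesis .
qed

lemma harm_bound:
  assumes k: "1 \<le> k"
  shows "(harm (k ^ j) :: real) \<le> 1 + real j * real k"
proof -
  have K: "1 \<le> k ^ j" using k by simp
  have "harm (k ^ j) - ln (real (k ^ j)) \<le> harm 1 - ln (real (1::nat))"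
    using euler_mascheroni_sequence_decreasing[of 1 "k ^ j"] K by simp
  then have "harm (k ^ j) \<le> 1 + ln (real (k ^ j))" by (simp add: harm_def)
  also have "ln (real (k ^ j)) = real j * ln (real k)" by (simp add: ln_realpow)
  also have "\<dots> \<le> real j * real k"
    using ln_le_minus_one[of "real k"] k by (intro mult_left_mono) auto
  finally show ?thesis by simp
qed

lemma final_arith:
  fixes cS H \<phi> :: real and n k m D :: nat
  assumes phi: "0 \<le> \<phi>" and k: "1 \<le> k" and m: "1 \<le> m" and H0: "0 \<le> H" and H: "H \<le> 1 + real (2 * m) * real k"
    and cS0: "0 \<le> cS" and cS: "cS \<le> real n * real k ^ (D + 2)"
  shows "cS * \<phi> * (2 * real m) * H \<le> 6 * real k ^ (4 * D + 6) * real n * real m ^ 2 * \<phi>"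
proof -
  have H3: "H \<le> 3 * real m * real k" using H m k
  proof -
    have "1 \<le> real m * real k" using m k by (metis mult_le_mono of_nat_1 of_nat_le_iff of_nat_mult mult_1)
    then show ?thesis using H by simp
  qed
  have "cS * \<phi> * (2 * real m) * H \<le> (real n * real k ^ (D + 2)) * \<phi> * (2 * real m) * (3 * real m * real k)"
    using phi m H0 cS0 cS H3 by (intro mult_mono) auto
  also have "\<dots> = 6 * real k ^ (D + 3) * real n * real m ^ 2 * \<phi>"
    by (simp add: power2_eq_square power_add algebra_simps numeral_3_eq_3)
  also have "\<dots> \<le> 6 * real k ^ (4 * D + 6) * real n * real m ^ 2 * \<phi>"
  proof -
    have "real k ^ (D + 3) \<le> real k ^ (4 * D + 6)" using k by (intro power_increasing) auto
    then show ?thesis using phi by (intro mult_right_mono) auto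
  qed
  finally show ?thesis .
qed



lemma core_shift:
  fixes M :: "'i \<Rightarrow> real measure" and G :: "('i \<Rightarrow> real) \<Rightarrow> real"
  assumes sf: "\<And>i. sigma_finite_measure (M i)"
    and prob: "\<And>i. i \<in> I \<Longrightarrow> prob_space (M i)"
    and fin: "finite I" and ei: "ei \<in> I"
    and Gm: "G \<in> borel_measurable (PiM I M)"
    and B: "B \<in> sets borel"
    and shift: "\<And>x y. G (x(ei := y)) = y + G (x(ei := 0))"
    and bnd: "\<And>x. (\<integral>\<^sup>+ y. indicator B (y + G (x(ei := 0))) \<partial>M ei) \<le> r"
  shows "(\<integral>\<^sup>+ x. indicator B (G x) \<partial>PiM I M) \<le> r"
proof -
  interpret product_sigma_finite M unfolding product_sigma_finite_def using sf by blast
  have Ieq: "insert ei (I - {ei}) = I" using ei by auto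
  have meas: "(\<lambda>x. indicator B (G x) :: ennreal) \<in> borel_measurable (PiM (insert ei (I - {ei})) M)"
    unfolding Ieq using Gm B by measurable
  have "(\<integral>\<^sup>+ x. indicator B (G x) \<partial>PiM I M) =
      (\<integral>\<^sup>+ x. (\<integral>\<^sup>+ y. indicator B (G (x(ei := y))) \<partial>M ei) \<partial>PiM (I - {ei}) M)"
    using product_nn_integral_insert[OF _ _ meas] fin ei by (simp add: insert_absorb)
  also have "\<dots> = (\<integral>\<^sup>+ x. (\<integral>\<^sup>+ y. indicator B (y + G ((x(ei := y))(ei := 0))) \<partial>M ei) \<partial>PiM (I - {ei}) M)"
    by (subst shift) simp
  also have "\<dots> = (\<integral>\<^sup>+ x. (\<integral>\<^sup>+ y. indicator B (y + G (x(ei := 0))) \<partial>M ei) \<partial>PiM (I - {ei}) M)"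
    by simp
  also have "\<dots> \<le> (\<integral>\<^sup>+ x. r \<partial>PiM (I - {ei}) M)"
    by (rule nn_integral_mono) (rule bnd)
  also have "\<dots> = r"
  proof -
    interpret p: prob_space "PiM (I - {ei}) M" by (rule prob_space_PiM) (auto intro: prob)
    show ?thesis by (simp add: p.emeasure_space_1)
  qed
  finally show ?thesis .
qed



lemma dens_interval:
  fixes g :: "real \<Rightarrow> real"
  assumes gm: "g \<in> borel_measurable lborel" and g0: "\<And>x. 0 \<le> g x" and gphi: "\<And>x. g x \<le> \<phi>"
    and eps: "0 \<le> \<epsilon>"
  shows "(\<integral>\<^sup>+ y. indicator {0<..\<epsilon>} (y + c) \<partial>density lborel (\<lambda>x. ennreal (g x))) \<le> ennreal (\<phi> * \<epsilon>)"
proof -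
  have phi0: "0 \<le> \<phi>" using g0[of 0] gphi[of 0] by linarith
  have ind: "\<And>y. indicator {0<..\<epsilon>} (y + c) = (indicator {-c<..\<epsilon>-c} y :: ennreal)"
    by (auto simp: indicator_def)
  have "(\<integral>\<^sup>+ y. indicator {0<..\<epsilon>} (y + c) \<partial>density lborel (\<lambda>x. ennreal (g x)))
      = (\<integral>\<^sup>+ y. ennreal (g y) * indicator {-c<..\<epsilon>-c} y \<partial>lborel)"
    unfolding ind using gm by (subst nn_integral_density) auto
  also have "\<dots> \<le> (\<integral>\<^sup>+ y. ennreal \<phi> * indicator {-c<..\<epsilon>-c} y \<partial>lborel)"
    by (intro nn_integral_mono mult_right_mono) (auto simp: gphi ennreal_leI)
  also have "\<dots> = ennreal \<phi> * emeasure lborel {-c<..\<epsilon>-c}"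
    by (subst nn_integral_cmult_indicator) auto
  also have "\<dots> = ennreal (\<phi> * \<epsilon>)"
    using eps phi0 by (simp add: ennreal_mult)
  finally show ?thesis .
qed

lemma dens_out:
  fixes g :: "real \<Rightarrow> real"
  assumes gm: "g \<in> borel_measurable lborel" and g0: "\<And>x. x \<notin> {-1..1} \<Longrightarrow> g x = 0"
  shows "(\<integral>\<^sup>+ y. indicator (- {-1..1}) (y + 0) \<partial>density lborel (\<lambda>x. ennreal (g x))) \<le> 0"
proof -
  have "(\<integral>\<^sup>+ y. indicator (- {-1..1}) (y + 0) \<partial>density lborel (\<lambda>x. ennreal (g x)))
      = (\<integral>\<^sup>+ y. ennreal (g y) * indicator (- {-1..1}) y \<partial>lborel)"
    using gm by (subst nn_integral_density) auto
  also have "(\<lambda>y. ennreal (g y) * indicator (- {-1..1}) y) = (\<lambda>y. 0)"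
  proof
    fix y show "ennreal (g y) * indicator (- {-1..1}) y = 0"
      using g0[of y] by (cases "y \<in> {-1..1}") auto
  qed
  finally show ?thesis by simp
qed



lemma idx_in:
  assumes sg: "simple_graph n E" and e: "{u,v} \<in> E" and x: "x < k" and y: "y < k"
  shows "idx u v x y \<in> entry_index E k"
proof -
  have uv: "u \<noteq> v" using sg_edge[OF sg e] by simp
  show ?thesis
  proof (cases "u < v")
    case True then show ?thesis using e x y by (simp add: idx_def entry_index_def)
  next
    case False
    then have "v < u" using uv by simp
    moreover have "{v,u} \<in> E" using e by (simp add: insert_commute)
    ultimately show ?thesis using False x y by (simp add: idx_def entry_index_def)
  qed
qed

lemma idx_inj:
  assumes "u \<noteq> v" "u \<noteq> v'" "idx u v p q = idx u v' p' q'"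
  shows "v = v' \<and> p = p'"
  using assms unfolding idx_def by (auto split: if_splits)

lemma entry_index_finite:
  assumes sg: "simple_graph n E" shows "finite (entry_index E k)"
proof -
  have "entry_index E k \<subseteq> {..<n} \<times> {..<n} \<times> {..<k} \<times> {..<k}"
    unfolding entry_index_def using sg_edge[OF sg] by auto
  then show ?thesis by (rule finite_subset) auto
qed

lemma comp_meas:
  assumes "\<And>e. sets (M e) = sets borel" and "e \<in> I"
  shows "(\<lambda>A. A e) \<in> borel_measurable (PiM I M)"
  using measurable_component_singleton[OF assms(2), of M] measurable_cong_sets[OF refl assms(1)[of e]] by blast

lemma gain_meas:
  assumes sg: "simple_graph n E" and s: "s \<in> steps_set n k E"
    and sets: "\<And>e. sets (M e) = sets borel"
  shows "(\<lambda>A. gain E A s) \<in> borel_measurable (PiM (entry_index E k) M)"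
proof -
  obtain u i a \<tau> where s': "s = (u,i,a,\<tau>)" "u < n" "i < k" "a < k" "\<tau> \<in> PiE (nbr E u) (\<lambda>_. {..<k})"
    using s unfolding steps_set_def by auto
  have "(\<lambda>A. \<Sum>v\<in>nbr E u. A (idx u v a (\<tau> v)) - A (idx u v i (\<tau> v))) \<in> borel_measurable (PiM (entry_index E k) M)"
  proof (rule borel_measurable_sum)
    fix v assume v: "v \<in> nbr E u"
    then have e: "{u,v} \<in> E" by (simp add: nbr_def)
    have tv: "\<tau> v < k" using s' v by auto
    show "(\<lambda>A. A (idx u v a (\<tau> v)) - A (idx u v i (\<tau> v))) \<in> borel_measurable (PiM (entry_index E k) M)"
      using comp_meas[OF sets idx_in[OF sg e s'(4) tv]] comp_meas[OF sets idx_in[OF sg e s'(3) tv]]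
      by (rule borel_measurable_diff)
  qed
  then show ?thesis using s' by (simp add: gain_def)
qed

lemma gain_shift:
  fixes \<tau> :: "nat \<Rightarrow> nat" and x :: "nat \<times> nat \<times> nat \<times> nat \<Rightarrow> real" and y :: real
  assumes sg: "simple_graph n E" and ia: "i \<noteq> a" and v0: "v0 \<in> nbr E u"
  defines "e0 \<equiv> idx u v0 a (\<tau> v0)"
  shows "gain E (x(e0 := y)) (u,i,a,\<tau>) = y + gain E (x(e0 := 0)) (u,i,a,\<tau>)"
proof -
  let ?N = "nbr E u"
  have fin: "finite ?N" by (rule nbr_finite[OF sg])
  have un: "\<And>v. v \<in> ?N \<Longrightarrow> u \<noteq> v" using nbr_notin[OF sg, of u] by auto
  define T where "T = (\<lambda>(A::nat\<times>nat\<times>nat\<times>nat \<Rightarrow> real) v. A (idx u v a (\<tau> v)) - A (idx u v i (\<tau> v)))"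
  have g: "\<And>A. gain E A (u,i,a,\<tau>) = T A v0 + (\<Sum>v\<in>?N - {v0}. T A v)"
    unfolding gain_def T_def using sum.remove[OF fin v0] by simp
  have R: "(\<Sum>v\<in>?N - {v0}. T (x(e0 := z)) v) = (\<Sum>v\<in>?N - {v0}. T x v)" for z
  proof (intro sum.cong refl)
    fix v assume v: "v \<in> ?N - {v0}"
    have "idx u v a (\<tau> v) \<noteq> e0" "idx u v i (\<tau> v) \<noteq> e0"
      using idx_inj[OF un[of v] un[OF v0]] v unfolding e0_def by auto
    then show "T (x(e0 := z)) v = T x v" unfolding T_def by simp
  qed
  have ne: "idx u v0 i (\<tau> v0) \<noteq> e0" using idx_inj[OF un[OF v0] un[OF v0]] ia unfolding e0_def by auto
  have T0: "T (x(e0 := z)) v0 = z - x (idx u v0 i (\<tau> v0))" for z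
    unfolding T_def using ne by (simp add: e0_def)
  show ?thesis unfolding g R T0 by simp
qed

locale smodel =
  fixes n k :: nat and E :: "nat set set" and f :: "nat \<times> nat \<times> nat \<times> nat \<Rightarrow> real \<Rightarrow> real" and \<phi> :: real
  assumes sg: "simple_graph n E"
    and fprops: "\<forall>e\<in>entry_index E k.
        f e \<in> borel_measurable lborel \<and>
        (\<forall>x. 0 \<le> f e x \<and> f e x \<le> \<phi>) \<and>
        (\<forall>x. x \<notin> {-1..1} \<longrightarrow> f e x = 0) \<and>
        prob_space (density lborel (\<lambda>x. ennreal (f e x)))"
begin

abbreviation I where "I \<equiv> entry_index E k"

definition M' :: "nat \<times> nat \<times> nat \<times> nat \<Rightarrow> real measure" where
  "M' e = (if e \<in> I then density lborel (\<lambda>x. ennreal (f e x)) else lborel)"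

lemma M'_sets: "sets (M' e) = sets borel"
  by (simp add: M'_def)

lemma M'_sf: "sigma_finite_measure (M' e)"
  using fprops by (auto simp: M'_def intro: prob_space_imp_sigma_finite sigma_finite_lborel)

lemma M'_prob: "e \<in> I \<Longrightarrow> prob_space (M' e)"
  using fprops by (auto simp: M'_def)

lemma PiM_eq: "PiM I (\<lambda>e. density lborel (\<lambda>x. ennreal (f e x))) = PiM I M'"
  by (rule PiM_cong) (auto simp: M'_def)

lemma gain_int:
  assumes s: "s \<in> steps_set n k E" and eps: "0 \<le> \<epsilon>"
  shows "(\<integral>\<^sup>+ A. indicator {0<..\<epsilon>} (gain E A s) \<partial>PiM I M') \<le> ennreal (\<phi> * \<epsilon>)"
proof -
  obtain u i a \<tau> where s': "s = (u,i,a,\<tau>)" "u < n" "i < k" "a < k" "i \<noteq> a" "\<tau> \<in> PiE (nbr E u) (\<lambda>_. {..<k})"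
    using s unfolding steps_set_def by auto
  show ?thesis
  proof (cases "nbr E u = {}")
    case True
    then have "\<And>A. gain E A s = 0" using s' by (simp add: gain_def)
    then show ?thesis by simp
  next
    case False
    then obtain v0 where v0: "v0 \<in> nbr E u" by blast
    let ?e0 = "idx u v0 a (\<tau> v0)"
    have e: "{u,v0} \<in> E" using v0 by (simp add: nbr_def)
    have e0: "?e0 \<in> I" using idx_in[OF sg e s'(4)] s' v0 by auto
    have fe: "f ?e0 \<in> borel_measurable lborel" "\<And>x. 0 \<le> f ?e0 x" "\<And>x. f ?e0 x \<le> \<phi>"
      using fprops e0 by auto
    show ?thesis
    proof (rule core_shift[where ei = ?e0])
      show "\<And>i. sigma_finite_measure (M' i)" by (rule M'_sf)
      show "\<And>i. i \<in> I \<Longrightarrow> prob_space (M' i)" by (rule M'_prob)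
      show "finite I" by (rule entry_index_finite[OF sg])
      show "?e0 \<in> I" by (rule e0)
      show "(\<lambda>A. gain E A s) \<in> borel_measurable (PiM I M')" by (rule gain_meas[OF sg s M'_sets])
      show "{0<..\<epsilon>} \<in> sets borel" by simp
      show "\<And>x y. gain E (x(?e0 := y)) s = y + gain E (x(?e0 := 0)) s"
        unfolding s'(1) by (rule gain_shift[OF sg s'(5) v0])
      show "\<And>x. (\<integral>\<^sup>+ y. indicator {0<..\<epsilon>} (y + gain E (x(?e0 := 0)) s) \<partial>M' ?e0) \<le> ennreal (\<phi> * \<epsilon>)"
        using dens_interval[OF fe eps] e0 by (simp add: M'_def)
    qed
  qed
qed

lemma bad_int:
  assumes e: "e \<in> I"
  shows "(\<integral>\<^sup>+ A. indicator (- {-1..1}) (A e) \<partial>PiM I M') = 0"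
proof -
  have fe: "f e \<in> borel_measurable lborel" "\<And>x. x \<notin> {-1..1} \<Longrightarrow> f e x = 0"
    using fprops e by auto
  have "(\<integral>\<^sup>+ A. indicator (- {-1..1}) (A e) \<partial>PiM I M') \<le> 0"
  proof (rule core_shift[where ei = e and G = "\<lambda>A. A e"])
    show "\<And>i. sigma_finite_measure (M' i)" by (rule M'_sf)
    show "\<And>i. i \<in> I \<Longrightarrow> prob_space (M' i)" by (rule M'_prob)
    show "finite I" by (rule entry_index_finite[OF sg])
    show "e \<in> I" by (rule e)
    show "(\<lambda>A. A e) \<in> borel_measurable (PiM I M')" by (rule comp_meas[OF M'_sets e])
    show "- {-1..1} \<in> sets (borel :: real measure)" by simp
    show "\<And>(x::nat \<times> nat \<times> nat \<times> nat \<Rightarrow> real) y. (x(e := y)) e = y + (x(e := 0)) e" by simp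
    show "\<And>x. (\<integral>\<^sup>+ y. indicator (- {-1..1}) (y + (x(e := 0)) e) \<partial>M' e) \<le> 0"
      using dens_out[OF fe] e by (simp add: M'_def)
  qed
  then show ?thesis by simp
qed

end



definition Bsum :: "nat \<Rightarrow> nat \<Rightarrow> nat set set \<Rightarrow> (nat \<times> nat \<times> nat \<times> nat \<Rightarrow> real) \<Rightarrow> ennreal" where
  "Bsum n k E A = (\<Sum>t\<in>{1..k ^ (2 * card E)}. \<Sum>s\<in>steps_set n k E.
      indicator {0<..2 * real (card E) / real t} (gain E A s))"

definition Bad :: "nat \<Rightarrow> nat set set \<Rightarrow> (nat \<times> nat \<times> nat \<times> nat \<Rightarrow> real) \<Rightarrow> ennreal" where
  "Bad k E A = (\<Sum>e\<in>entry_index E k. \<top> * indicator (- {-1..1}) (A e))"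

lemma seq_bound:
  assumes sg: "simple_graph n E" and k: "1 \<le> k" and A: "\<forall>x\<in>entry_index E k. \<bar>A x\<bar> \<le> 1"
    and xs: "br_seq n k E A xs"
  shows "ennreal (real (length xs - 1)) \<le> Bsum n k E A"
proof (cases "2 \<le> length xs")
  case False then show ?thesis by simp
next
  case True
  let ?L = "length xs - 1"
  let ?K = "k ^ (2 * card E)"
  let ?S = "steps_set n k E"
  let ?c = "\<lambda>t::nat. 2 * real (card E) / real t"
  obtain s where s: "s \<in> ?S" "0 < gain E A s" "gain E A s \<le> ?c ?L"
    using small_gain[OF sg xs A True] by blast
  have LK: "?L \<le> ?K" using length_bound[OF sg xs k] by simp
  have finS: "finite ?S" by (rule steps_finite[OF sg])
  have "ennreal (real ?L) = (\<Sum>t\<in>{1..?L}. (1::ennreal))" by (simp add: ennreal_of_nat_eq_real_of_nat)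
  also have "\<dots> = (\<Sum>t\<in>{1..?L}. indicator {0<..?c t} (gain E A s))"
  proof (intro sum.cong refl)
    fix t assume t: "t \<in> {1..?L}"
    have "?c ?L \<le> ?c t" using t by (intro divide_left_mono) auto
    then show "1 = (indicator {0<..?c t} (gain E A s) :: ennreal)" using s by auto
  qed
  also have "\<dots> \<le> (\<Sum>t\<in>{1..?L}. \<Sum>s'\<in>?S. indicator {0<..?c t} (gain E A s'))"
    by (intro sum_mono member_le_sum[OF s(1)]) (auto simp: finS)
  also have "\<dots> \<le> (\<Sum>t\<in>{1..?K}. \<Sum>s'\<in>?S. indicator {0<..?c t} (gain E A s'))"
    by (rule sum_mono2) (use LK in auto)
  finally show ?thesis unfolding Bsum_def .
qed

lemma pointwise:
  assumes sg: "simple_graph n E" and k: "1 \<le> k"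
  shows "max_br_steps n k E A \<le> Bsum n k E A + Bad k E A"
proof (cases "\<forall>x\<in>entry_index E k. \<bar>A x\<bar> \<le> 1")
  case True
  have "max_br_steps n k E A \<le> Bsum n k E A"
    unfolding max_br_steps_def by (rule SUP_least) (use seq_bound[OF sg k True] in auto)
  then show ?thesis by (rule add_increasing2[rotated]) simp
next
  case False
  then obtain e where e: "e \<in> entry_index E k" "\<bar>A e\<bar> > 1" by force
  then have "A e \<in> - {-1..1}" by auto
  then have "\<top> \<le> \<top> * (indicator (- {-1..1}) (A e) :: ennreal)" by simp
  also have "\<dots> \<le> Bad k E A" unfolding Bad_def
    by (rule member_le_sum[OF e(1)]) (auto simp: entry_index_finite[OF sg])
  finally have "Bad k E A = \<top>" by (simp add: top_unique)
  then show ?thesis by simp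
qed

context smodel begin

lemma main_int:
  assumes k: "1 \<le> k" and En: "E \<noteq> {}"
  shows "(\<integral>\<^sup>+ A. max_br_steps n k E A \<partial>PiM I M') \<le>
    ennreal (real (card (steps_set n k E)) * \<phi> * (2 * real (card E)) * harm (k ^ (2 * card E)))"
proof -
  let ?K = "k ^ (2 * card E)"
  let ?S = "steps_set n k E"
  let ?c = "\<lambda>t::nat. 2 * real (card E) / real t"
  have phi: "0 \<le> \<phi>" if ne: "I \<noteq> {}"
  proof -
    obtain e where e: "e \<in> I" using ne by blast
    then have "0 \<le> f e 0" "f e 0 \<le> \<phi>" using fprops by auto
    then show ?thesis by linarith
  qed
  have mi: "(\<lambda>A. indicator {0<..?c t} (gain E A s) :: ennreal) \<in> borel_measurable (PiM I M')"
    if "s \<in> ?S" for s t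
    using measurable_compose[OF gain_meas[OF sg that M'_sets] borel_measurable_indicator[of "{0<..?c t}" borel]]
    by simp
  have mb: "(\<lambda>A. \<top> * indicator (- {-1..1}) (A e) :: ennreal) \<in> borel_measurable (PiM I M')"
    if "e \<in> I" for e
  proof -
    have "(\<lambda>A. indicator (- {-1..1}) (A e) :: ennreal) \<in> borel_measurable (PiM I M')"
      using measurable_compose[OF comp_meas[where M=M', OF M'_sets that] borel_measurable_indicator[of "- {-1..1}" borel]]
      by simp
    then show ?thesis by (intro borel_measurable_times_ennreal) auto
  qed
  have mBs: "(\<lambda>A. Bsum n k E A) \<in> borel_measurable (PiM I M')"
    unfolding Bsum_def by (intro borel_measurable_sum mi)
  have mBd: "(\<lambda>A. Bad k E A) \<in> borel_measurable (PiM I M')"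
    unfolding Bad_def by (intro borel_measurable_sum mb)
  have "(\<integral>\<^sup>+ A. max_br_steps n k E A \<partial>PiM I M') \<le> (\<integral>\<^sup>+ A. Bsum n k E A + Bad k E A \<partial>PiM I M')"
    by (intro nn_integral_mono pointwise[OF sg k])
  also have "\<dots> = (\<integral>\<^sup>+ A. Bsum n k E A \<partial>PiM I M') + (\<integral>\<^sup>+ A. Bad k E A \<partial>PiM I M')"
    by (rule nn_integral_add[OF mBs mBd])
  also have "(\<integral>\<^sup>+ A. Bad k E A \<partial>PiM I M') = 0"
  proof -
    have "(\<integral>\<^sup>+ A. Bad k E A \<partial>PiM I M') = (\<Sum>e\<in>I. \<integral>\<^sup>+ A. \<top> * indicator (- {-1..1}) (A e) \<partial>PiM I M')"
      unfolding Bad_def by (rule nn_integral_sum) (rule mb)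
    also have "\<dots> = (\<Sum>e\<in>I. \<top> * (\<integral>\<^sup>+ A. indicator (- {-1..1}) (A e) \<partial>PiM I M'))"
    proof (intro sum.cong refl nn_integral_cmult)
      fix e assume e: "e \<in> I"
      show "(\<lambda>A. indicator (- {-1..1}) (A e) :: ennreal) \<in> borel_measurable (PiM I M')"
        using measurable_compose[OF comp_meas[where M=M', OF M'_sets e] borel_measurable_indicator[of "- {-1..1}" borel]]
        by simp
    qed
    also have "\<dots> = 0" using bad_int by simp
    finally show ?thesis .
  qed
  also have "(\<integral>\<^sup>+ A. Bsum n k E A \<partial>PiM I M') =
      (\<Sum>t\<in>{1..?K}. \<Sum>s\<in>?S. \<integral>\<^sup>+ A. indicator {0<..?c t} (gain E A s) \<partial>PiM I M')"
    unfolding Bsum_def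
    by (subst nn_integral_sum) (auto intro!: borel_measurable_sum mi sum.cong nn_integral_sum)
  also have "\<dots> \<le> (\<Sum>t\<in>{1..?K}. \<Sum>s\<in>?S. ennreal (\<phi> * ?c t))"
    by (intro sum_mono gain_int) auto
  finally have le: "(\<integral>\<^sup>+ A. max_br_steps n k E A \<partial>PiM I M') \<le> (\<Sum>t\<in>{1..?K}. \<Sum>s\<in>?S. ennreal (\<phi> * ?c t))"
    by simp
  show ?thesis
  proof -
    obtain e where e: "e \<in> E" using En by blast
    then obtain u v where uv: "e = {u,v}" "u < v" using sg_edge2[OF sg] by blast
    then have "(u,v,0,0) \<in> I" using e k by (simp add: entry_index_def)
    then have "I \<noteq> {}" by blast
    then have p: "0 \<le> \<phi>" by (rule phi)
    have "(\<Sum>t\<in>{1..?K}. \<Sum>s\<in>?S. ennreal (\<phi> * ?c t)) = ennreal (\<Sum>t\<in>{1..?K}. \<Sum>s\<in>?S. \<phi> * ?c t)"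
      using p by (subst sum_ennreal[symmetric], simp, intro sum.cong refl sum_ennreal) auto
    also have "(\<Sum>t\<in>{1..?K}. \<Sum>s\<in>?S. \<phi> * ?c t) = real (card ?S) * \<phi> * (2 * real (card E)) * harm ?K"
      by (simp add: harm_def sum_distrib_left divide_inverse mult_ac)
    finally show ?thesis using le by simp
  qed
qed

end



lemma zero_case:
  assumes "k = 0 \<or> E = {}"
  shows "max_br_steps n k E A \<le> 0"
  unfolding max_br_steps_def
proof (rule SUP_least)
  fix xs assume xs: "xs \<in> {xs. br_seq n k E A xs}"
  have "\<not> 2 \<le> length xs"
  proof
    assume L: "2 \<le> length xs"
    have all: "\<forall>i. Suc i < length xs \<longrightarrow> br_step n k E A (xs ! i) (xs ! Suc i)"
      using xs unfolding br_seq_def by blast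
    have "br_step n k E A (xs ! 0) (xs ! Suc 0)" using all L by auto
    then obtain u a where ua0: "u < n" "a < k" "xs ! Suc 0 = (xs ! 0)(u := a)"
      "payoff E A (xs ! 0) u < payoff E A (xs ! Suc 0) u"
      unfolding br_step_def by blast
    then have ua: "a < k" "payoff E A (xs ! 0) u < payoff E A ((xs ! 0)(u := a)) u" by simp_all
    show False
    proof (cases "k = 0")
      case True then show False using ua by simp
    next
      case False then have "E = {}" using assms by simp
      then show False using ua by (simp add: payoff_def)
    qed
  qed
  then show "ennreal (real (length xs - 1)) \<le> 0" by simp
qed

theorem mainTheorem13:
  "\<exists>C>0. \<forall>(n::nat) (k::nat) (E::nat set set) (f::nat \<times> nat \<times> nat \<times> nat \<Rightarrow> real \<Rightarrow> real) (\<phi>::real).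
     simple_graph n E \<longrightarrow>
     (\<forall>e\<in>entry_index E k.
        f e \<in> borel_measurable lborel \<and>
        (\<forall>x. 0 \<le> f e x \<and> f e x \<le> \<phi>) \<and>
        (\<forall>x. x \<notin> {-1..1} \<longrightarrow> f e x = 0) \<and>
        prob_space (density lborel (\<lambda>x. ennreal (f e x)))) \<longrightarrow>
     (\<integral>\<^sup>+ A. max_br_steps n k E A
        \<partial>(PiM (entry_index E k) (\<lambda>e. density lborel (\<lambda>x. ennreal (f e x)))))
       \<le> ennreal (C * real k ^ (4 * max_degree n E + 6) * real n * real (card E) ^ 2 * \<phi>)"
proof (intro exI[of _ "6::real"] conjI allI impI)
  show "(0::real) < 6" by simp
  fix n k :: nat and E :: "nat set set" and f :: "nat \<times> nat \<times> nat \<times> nat \<Rightarrow> real \<Rightarrow> real" and \<phi> :: real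
  assume sg: "simple_graph n E"
    and fp: "\<forall>e\<in>entry_index E k.
        f e \<in> borel_measurable lborel \<and>
        (\<forall>x. 0 \<le> f e x \<and> f e x \<le> \<phi>) \<and>
        (\<forall>x. x \<notin> {-1..1} \<longrightarrow> f e x = 0) \<and>
        prob_space (density lborel (\<lambda>x. ennreal (f e x)))"
  let ?P = "PiM (entry_index E k) (\<lambda>e. density lborel (\<lambda>x. ennreal (f e x)))"
  show "(\<integral>\<^sup>+ A. max_br_steps n k E A \<partial>?P)
       \<le> ennreal (6 * real k ^ (4 * max_degree n E + 6) * real n * real (card E) ^ 2 * \<phi>)"
  proof (cases "k = 0 \<or> E = {}")
    case True
    have "(\<integral>\<^sup>+ A. max_br_steps n k E A \<partial>?P) \<le> (\<integral>\<^sup>+ A. 0 \<partial>?P)"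
      by (intro nn_integral_mono zero_case[OF True])
    then show ?thesis by simp
  next
    case False
    then have k: "1 \<le> k" and En: "E \<noteq> {}" by auto
    interpret smodel n k E f \<phi> by (rule smodel.intro[OF sg fp])
    have m: "1 \<le> card E" using En sg_finite[OF sg] by (simp add: Suc_le_eq card_gt_0_iff)
    have phi: "0 \<le> \<phi>"
    proof -
      obtain e where e: "e \<in> E" using En by blast
      then obtain u v where uv: "e = {u,v}" "u < v" using sg_edge2[OF sg] by blast
      then have "(u,v,0,0) \<in> entry_index E k" using e k by (simp add: entry_index_def)
      then have "0 \<le> f (u,v,0,0) 0" "f (u,v,0,0) 0 \<le> \<phi>" using fp by auto
      then show ?thesis by linarith
    qed
    have "(\<integral>\<^sup>+ A. max_br_steps n k E A \<partial>?P) = (\<integral>\<^sup>+ A. max_br_steps n k E A \<partial>PiM I M')"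
      by (simp add: PiM_eq)
    also have "\<dots> \<le> ennreal (real (card (steps_set n k E)) * \<phi> * (2 * real (card E)) * harm (k ^ (2 * card E)))"
      by (rule main_int[OF k En])
    also have "\<dots> \<le> ennreal (6 * real k ^ (4 * max_degree n E + 6) * real n * real (card E) ^ 2 * \<phi>)"
    proof (rule ennreal_leI, rule final_arith[OF phi k m])
      show "0 \<le> (harm (k ^ (2 * card E)) :: real)" by (rule harm_nonneg)
      show "harm (k ^ (2 * card E)) \<le> 1 + real (2 * card E) * real k" by (rule harm_bound[OF k])
      show "0 \<le> real (card (steps_set n k E))" by simp
      have "card (steps_set n k E) \<le> n * k ^ (max_degree n E + 2)" by (rule steps_card[OF sg k])
      then show "real (card (steps_set n k E)) \<le> real n * real k ^ (max_degree n E + 2)"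
        by (simp only: of_nat_mult[symmetric] of_nat_power[symmetric] of_nat_le_iff)
    qed
    finally show ?thesis .
  qed
qed


end
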